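(* Let $x_0>0$, $y_0>0$, and let $T>0$, $c_0>0$ satisfy \[ |x_0|+|x_0-y_0^2|T\le c_0,\quad |y_0|+|y_0-x_0^2|T\le c_0,\quad |x_0|+c_0T+c_0^2T\le c_0,\quad |y_0|+c_0T+c_0^2T\le c_0. \] Then there exists $(x,y)\in C^1([0,T];\mathbb{R}^2)$ solving \[ \dot x(t)=x(t)-\max_{s\in[0,t]}y^2(s),\qquad \dot y(t)=y(t)-\max_{s\in[0,t]}x^2(s),\quad t\in[0,T],\qquad x(0)=x_0,\ y(0)=y_0. \] *)

theory Defs
  imports "HOL-Analysis.Analysis"
begin

end

theory Submission
  imports Defs
begin

definition sat :: "real \<Rightarrow> real \<Rightarrow> real" where
  "sat c v = max (-c) (min c v)"

definition rmax :: "(real \<Rightarrow> real) \<Rightarrow> real \<Rightarrow> real" where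
  "rmax g s = (SUP r\<in>{0..s}. g r)"

lemma sat_bound: "0 \<le> c \<Longrightarrow> \<bar>sat c v\<bar> \<le> c"
  unfolding sat_def by auto

lemma sat_id: "\<bar>v\<bar> \<le> c \<Longrightarrow> sat c v = v"
  unfolding sat_def by auto

lemma sat_lip: "0 \<le> c \<Longrightarrow> \<bar>sat c a - sat c b\<bar> \<le> \<bar>a - b\<bar>"
  unfolding sat_def by (auto simp: max_def min_def)

lemma sat_sq_lip: assumes "0 \<le> c"
  shows "\<bar>(sat c a)^2 - (sat c b)^2\<bar> \<le> 2 * c * \<bar>a - b\<bar>"
proof -
  have "\<bar>(sat c a)^2 - (sat c b)^2\<bar> = \<bar>sat c a + sat c b\<bar> * \<bar>sat c a - sat c b\<bar>"
    by (simp add: power2_eq_square abs_mult[symmetric] algebra_simps)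
  also have "\<dots> \<le> (2 * c) * \<bar>a - b\<bar>"
  proof (rule mult_mono)
    show "\<bar>sat c a + sat c b\<bar> \<le> 2 * c" using sat_bound[OF assms, of a] sat_bound[OF assms, of b] by linarith
  qed (use sat_lip[OF assms] assms in auto)
  finally show ?thesis by simp
qed

lemma rmax_upper: "(\<And>r. g r \<le> B) \<Longrightarrow> r \<in> {0..s} \<Longrightarrow> g r \<le> rmax g s"
  unfolding rmax_def by (rule cSUP_upper) (auto intro!: bdd_aboveI2[where M=B])

lemma rmax_least: "0 \<le> s \<Longrightarrow> (\<And>r. r \<in> {0..s} \<Longrightarrow> g r \<le> C) \<Longrightarrow> rmax g s \<le> C"
  unfolding rmax_def by (rule cSUP_least) auto

lemma rmax_ext: "0 \<le> a \<Longrightarrow> a \<le> b \<Longrightarrow> (\<And>r. g r \<le> B) \<Longrightarrow> (\<And>r. r \<in> {a..b} \<Longrightarrow> g r \<le> C)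
   \<Longrightarrow> rmax g b \<le> max (rmax g a) C"
proof -
  assume h: "0 \<le> a" "a \<le> b" "\<And>r. g r \<le> B" "\<And>r. r \<in> {a..b} \<Longrightarrow> g r \<le> C"
  show ?thesis
  proof (rule rmax_least)
    fix r assume r: "r \<in> {0..b}"
    show "g r \<le> max (rmax g a) C"
    proof (cases "r \<le> a")
      case True then have "g r \<le> rmax g a" using r by (intro rmax_upper[OF h(3)]) auto
      then show ?thesis by simp
    next
      case False then show ?thesis using h(4)[of r] r by auto
    qed
  qed (use h in auto)
qed

lemma rmax_mono: "0 \<le> a \<Longrightarrow> a \<le> b \<Longrightarrow> (\<And>r. g r \<le> B) \<Longrightarrow> rmax g a \<le> rmax g b"
  by (rule rmax_least) (auto intro!: rmax_upper[where B=B])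

lemma rmax_lip: assumes "0 \<le> s" "\<And>r. g r \<le> B" "\<And>r. h r \<le> B"
   "\<And>r. r \<in> {0..s} \<Longrightarrow> \<bar>g r - h r\<bar> \<le> D"
  shows "\<bar>rmax g s - rmax h s\<bar> \<le> D"
proof -
  have "rmax g s \<le> rmax h s + D"
    by (rule rmax_least[OF assms(1)]) (smt (verit) assms(3,4) rmax_upper)
  moreover have "rmax h s \<le> rmax g s + D"
    by (rule rmax_least[OF assms(1)]) (smt (verit) assms(2,4) rmax_upper)
  ultimately show ?thesis by linarith
qed

lemma rmax_cont:
  assumes cont: "\<And>x. isCont g x" and bd: "\<And>r. g r \<le> B"
  shows "continuous_on {0..} (rmax g)"
  unfolding continuous_on_iff
proof (intro ballI allI impI)
  fix x e :: real assume x: "x \<in> {0..}" and e: "0 < e"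
  from cont[of x] e obtain d where d: "d > 0" "\<And>y. dist y x < d \<Longrightarrow> dist (g y) (g x) < e/3"
    unfolding continuous_at_eps_delta by (metis zero_less_divide_iff zero_less_numeral)
  show "\<exists>d>0. \<forall>x'\<in>{0..}. dist x' x < d \<longrightarrow> dist (rmax g x') (rmax g x) < e"
  proof (intro exI conjI ballI impI)
    fix y assume y: "y \<in> {0..}" "dist y x < d"
    show "dist (rmax g y) (rmax g x) < e"
    proof (cases "x \<le> y")
      case True
      have "rmax g y \<le> max (rmax g x) (g x + e/3)"
      proof (rule rmax_ext[OF _ True bd])
        fix r assume "r \<in> {x..y}"
        then have "dist r x < d" using y True by (auto simp: dist_real_def)
        then show "g r \<le> g x + e/3" using d(2)[of r] unfolding dist_real_def by (smt (verit))
      qed (use x in auto)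
      moreover have "g x \<le> rmax g x" using x by (intro rmax_upper[OF bd]) auto
      moreover have "rmax g x \<le> rmax g y" using x True by (intro rmax_mono[OF _ _ bd]) auto
      ultimately show ?thesis using e by (auto simp: dist_real_def)
    next
      case False
      have "rmax g x \<le> max (rmax g y) (g x + e/3)"
      proof (rule rmax_ext[OF _ _ bd])
        fix r assume "r \<in> {y..x}"
        then have "dist r x < d" using y False by (auto simp: dist_real_def)
        then show "g r \<le> g x + e/3" using d(2)[of r] unfolding dist_real_def by (smt (verit))
      qed (use y False in auto)
      moreover have "g y \<le> rmax g y" using y by (intro rmax_upper[OF bd]) auto
      moreover have "g x \<le> g y + e/3" using d(2)[of y] y unfolding dist_real_def by (smt (verit))
      moreover have "rmax g y \<le> rmax g x" using y False by (intro rmax_mono[OF _ _ bd]) auto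
      ultimately show ?thesis using e by (auto simp: dist_real_def)
    qed
  qed (use d in auto)
qed


definition clampT :: "real \<Rightarrow> real \<Rightarrow> real" where
  "clampT T t = max 0 (min T t)"

definition Fm :: "real \<Rightarrow> real \<Rightarrow> (real \<Rightarrow> real) \<Rightarrow> (real \<Rightarrow> real) \<Rightarrow> real \<Rightarrow> real" where
  "Fm c K u v s = sat c (exp (K * s) * u s) - rmax (\<lambda>r. (sat c (exp (K * r) * v r))^2) s"

definition Gm :: "real \<Rightarrow> real \<Rightarrow> real \<Rightarrow> real \<Rightarrow> (real \<Rightarrow> real) \<Rightarrow> (real \<Rightarrow> real) \<Rightarrow> real \<Rightarrow> real" where
  "Gm c K T z u v t = exp (-(K * clampT T t)) * (z + integral {0..clampT T t} (Fm c K u v))"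

lemma clampT_cont: "continuous_on UNIV (clampT T)"
  unfolding clampT_def by (intro continuous_intros)

lemma clampT_range: "0 \<le> T \<Longrightarrow> clampT T t \<in> {0..T}"
  unfolding clampT_def by auto

lemma clampT_id: "t \<in> {0..T} \<Longrightarrow> clampT T t = t"
  unfolding clampT_def by auto

lemma sat_cont: "continuous_on UNIV (sat c)"
  unfolding sat_def by (intro continuous_intros)

lemma sat_sq_le: "0 \<le> c \<Longrightarrow> (sat c w)^2 \<le> c^2"
proof -
  assume c: "0 \<le> c"
  have "\<bar>sat c w\<bar>^2 \<le> c^2" by (rule power_mono[OF sat_bound[OF c]]) simp
  then show ?thesis by simp
qed

lemma Fm_cont:
  assumes "continuous_on UNIV u" "continuous_on UNIV v" "0 \<le> c"
  shows "continuous_on {0..} (Fm c K u v)"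
proof -
  have cs: "continuous_on UNIV (\<lambda>s. sat c (exp (K * s) * w s))" if "continuous_on UNIV w" for w
    by (rule continuous_on_compose2[OF sat_cont]) (auto intro!: continuous_intros that)
  have "continuous_on UNIV (\<lambda>r. (sat c (exp (K * r) * v r))^2)"
    by (intro continuous_intros cs assms)
  then have "isCont (\<lambda>r. (sat c (exp (K * r) * v r))^2) x" for x
    by (simp add: continuous_on_eq_continuous_at)
  then have "continuous_on {0..} (rmax (\<lambda>r. (sat c (exp (K * r) * v r))^2))"
    by (rule rmax_cont) (rule sat_sq_le[OF assms(3)])
  moreover have "continuous_on {0..} (\<lambda>s. sat c (exp (K * s) * u s))"
    using cs[OF assms(1)] by (rule continuous_on_subset) auto
  ultimately show ?thesis unfolding Fm_def by (intro continuous_intros)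
qed

lemma Fm_bound:
  assumes "0 \<le> c" "0 \<le> s"
  shows "\<bar>Fm c K u v s\<bar> \<le> c + c^2"
proof -
  let ?g = "\<lambda>r. (sat c (exp (K * r) * v r))^2"
  have "?g 0 \<le> rmax ?g s" using assms by (intro rmax_upper[where B="c^2"] sat_sq_le) auto
  moreover have "0 \<le> ?g 0" by simp
  moreover have "rmax ?g s \<le> c^2" using assms by (intro rmax_least sat_sq_le) auto
  moreover have "\<bar>sat c (exp (K * s) * u s)\<bar> \<le> c" using sat_bound assms by auto
  ultimately show ?thesis unfolding Fm_def by linarith
qed

lemma int_bound:
  assumes "continuous_on UNIV u" "continuous_on UNIV v" "0 \<le> c" "0 \<le> \<tau>"
  shows "\<bar>integral {0..\<tau>} (Fm c K u v)\<bar> \<le> (c + c^2) * \<tau>"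
proof -
  have "norm (integral {0..\<tau>} (Fm c K u v)) \<le> (c + c^2) * (\<tau> - 0)"
    by (rule integral_bound) (use assms Fm_bound[OF assms(3)] in \<open>auto intro: continuous_on_subset[OF Fm_cont]\<close>)
  then show ?thesis by simp
qed

lemma sol_bound:
  assumes "continuous_on UNIV u" "continuous_on UNIV v" "0 \<le> c" "0 \<le> z"
    "z + c*T + c^2*T \<le> c" "\<tau> \<in> {0..T}"
  shows "\<bar>z + integral {0..\<tau>} (Fm c K u v)\<bar> \<le> c"
proof -
  have "\<bar>integral {0..\<tau>} (Fm c K u v)\<bar> \<le> (c + c^2) * \<tau>"
    using assms by (intro int_bound) auto
  also have "\<dots> \<le> (c + c^2) * T" using assms by (intro mult_left_mono) auto
  finally show ?thesis using assms by (auto simp: algebra_simps)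
qed

lemma Gm_bcont:
  assumes "continuous_on UNIV u" "continuous_on UNIV v" "0 \<le> c" "0 \<le> z"
    "z + c*T + c^2*T \<le> c" "0 \<le> T" "0 \<le> K"
  shows "Gm c K T z u v \<in> bcontfun"
proof (rule bcontfun_normI)
  have "continuous_on {0..T} (\<lambda>x. integral {0..x} (Fm c K u v))"
    by (intro indefinite_integral_continuous_1 integrable_continuous_interval
        continuous_on_subset[OF Fm_cont[OF assms(1-3)]]) auto
  then have "continuous_on UNIV (\<lambda>t. integral {0..clampT T t} (Fm c K u v))"
    by (rule continuous_on_compose2[OF _ clampT_cont]) (use clampT_range[OF assms(6)] in auto)
  then show "continuous_on UNIV (Gm c K T z u v)"
    unfolding Gm_def by (intro continuous_intros clampT_cont)
  fix t
  have "\<bar>z + integral {0..clampT T t} (Fm c K u v)\<bar> \<le> c"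
    by (rule sol_bound) (use assms clampT_range[OF assms(6)] in auto)
  moreover have "exp (-(K * clampT T t)) \<le> 1" "0 < exp (-(K * clampT T t))"
    using clampT_range[OF assms(6), of t] assms(7) by auto
  ultimately have "exp (-(K * clampT T t)) * \<bar>z + integral {0..clampT T t} (Fm c K u v)\<bar> \<le> 1 * c"
    by (intro mult_mono) auto
  then show "norm (Gm c K T z u v t) \<le> c" unfolding Gm_def by (simp add: abs_mult)
qed

lemma exp_integral:
  fixes A K \<tau> :: real
  assumes "0 < K" "0 \<le> \<tau>"
  shows "integral {0..\<tau>} (\<lambda>s. A * exp (K * s)) = A * (exp (K * \<tau>) - 1) / K"
proof -
  have "((\<lambda>s. A * exp (K * s)) has_integral ((\<lambda>s. A * exp (K * s) / K) \<tau> - (\<lambda>s. A * exp (K * s) / K) 0)) {0..\<tau>}"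
  proof (rule fundamental_theorem_of_calculus[OF assms(2)])
    fix x :: real
    have "((\<lambda>s. A * exp (K * s) / K) has_real_derivative (A * exp (K * x))) (at x within {0..\<tau>})"
      using assms by (auto intro!: derivative_eq_intros)
    then show "((\<lambda>s. A * exp (K * s) / K) has_vector_derivative A * exp (K * x)) (at x within {0..\<tau>})"
      using assms by (simp add: has_real_derivative_iff_has_vector_derivative)
  qed
  then have "integral {0..\<tau>} (\<lambda>s. A * exp (K * s)) = A * exp (K * \<tau>) / K - A * exp (K * 0) / K"
    by (rule integral_unique)
  then show ?thesis by (simp add: diff_divide_distrib right_diff_distrib)
qed

lemma Gm_lip:
  assumes cu: "continuous_on UNIV u" "continuous_on UNIV u'" and cv: "continuous_on UNIV v" "continuous_on UNIV v'"
    and c: "0 \<le> c" and K: "0 < K" and T: "0 \<le> T"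
    and du: "\<And>s. \<bar>u s - u' s\<bar> \<le> d" and dv: "\<And>s. \<bar>v s - v' s\<bar> \<le> d"
  shows "\<bar>Gm c K T z u v t - Gm c K T z u' v' t\<bar> \<le> (1 + 2*c) / K * d"
proof -
  define \<tau> where "\<tau> = clampT T t"
  have \<tau>: "0 \<le> \<tau>" "\<tau> \<le> T" using clampT_range[OF T] unfolding \<tau>_def by auto
  have d0: "0 \<le> d" using du[of 0] by linarith
  have int1: "Fm c K u v integrable_on {0..\<tau>}" "Fm c K u' v' integrable_on {0..\<tau>}"
    by (intro integrable_continuous_interval continuous_on_subset[OF Fm_cont]; use assms in auto)+
  have pt: "\<bar>Fm c K u v s - Fm c K u' v' s\<bar> \<le> (1 + 2*c) * d * exp (K * s)" if s: "s \<in> {0..\<tau>}" for s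
  proof -
    have a: "\<bar>sat c (exp (K * s) * u s) - sat c (exp (K * s) * u' s)\<bar> \<le> d * exp (K * s)"
    proof -
      have "\<bar>sat c (exp (K * s) * u s) - sat c (exp (K * s) * u' s)\<bar> \<le> \<bar>exp (K * s) * u s - exp (K * s) * u' s\<bar>"
        by (rule sat_lip[OF c])
      also have "\<dots> = exp (K * s) * \<bar>u s - u' s\<bar>" by (simp add: abs_mult right_diff_distrib[symmetric])
      also have "\<dots> \<le> exp (K * s) * d" by (intro mult_left_mono du) auto
      finally show ?thesis by (simp add: mult.commute)
    qed
    have b: "\<bar>rmax (\<lambda>r. (sat c (exp (K * r) * v r))^2) s - rmax (\<lambda>r. (sat c (exp (K * r) * v' r))^2) s\<bar>
          \<le> 2 * c * d * exp (K * s)"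
    proof (rule rmax_lip[where B="c^2"])
      fix r assume r: "r \<in> {0..s}"
      have "\<bar>(sat c (exp (K * r) * v r))^2 - (sat c (exp (K * r) * v' r))^2\<bar> \<le> 2 * c * \<bar>exp (K * r) * v r - exp (K * r) * v' r\<bar>"
        by (rule sat_sq_lip[OF c])
      also have "\<dots> = 2 * c * (exp (K * r) * \<bar>v r - v' r\<bar>)" by (simp add: abs_mult right_diff_distrib[symmetric])
      also have "\<dots> \<le> 2 * c * (exp (K * s) * d)"
        using r K c by (intro mult_left_mono mult_mono dv) auto
      finally show "\<bar>(sat c (exp (K * r) * v r))^2 - (sat c (exp (K * r) * v' r))^2\<bar> \<le> 2 * c * d * exp (K * s)"
        by (simp add: mult_ac)
    qed (use s c sat_sq_le in auto)
    show ?thesis using a b unfolding Fm_def by (simp add: algebra_simps)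
  qed
  have "\<bar>integral {0..\<tau>} (Fm c K u v) - integral {0..\<tau>} (Fm c K u' v')\<bar>
      = norm (integral {0..\<tau>} (\<lambda>s. Fm c K u v s - Fm c K u' v' s))"
    by (simp add: integral_diff[OF int1])
  also have "\<dots> \<le> integral {0..\<tau>} (\<lambda>s. (1 + 2*c) * d * exp (K * s))"
    by (rule integral_norm_bound_integral)
       (use int1 pt in \<open>auto intro!: integrable_diff[OF int1] integrable_continuous_interval continuous_intros\<close>)
  also have "\<dots> = (1 + 2*c) * d * (exp (K * \<tau>) - 1) / K" by (rule exp_integral[OF K \<tau>(1)])
  also have "\<dots> \<le> (1 + 2*c) * d * exp (K * \<tau>) / K"
    using K c d0 by (intro divide_right_mono mult_left_mono) auto
  finally have I: "\<bar>integral {0..\<tau>} (Fm c K u v) - integral {0..\<tau>} (Fm c K u' v')\<bar> \<le> (1 + 2*c) * d * exp (K * \<tau>) / K" .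
  have "\<bar>Gm c K T z u v t - Gm c K T z u' v' t\<bar>
     = exp (-(K * \<tau>)) * \<bar>integral {0..\<tau>} (Fm c K u v) - integral {0..\<tau>} (Fm c K u' v')\<bar>"
    unfolding Gm_def \<tau>_def[symmetric] by (simp add: abs_mult right_diff_distrib[symmetric])
  also have "\<dots> \<le> exp (-(K * \<tau>)) * ((1 + 2*c) * d * exp (K * \<tau>) / K)"
    by (intro mult_left_mono I) auto
  also have "\<dots> = (1 + 2*c) / K * d" using K by (simp add: exp_minus field_simps)
  finally show ?thesis .
qed


lemma fixed_sol:
  assumes cu: "continuous_on UNIV u" and cv: "continuous_on UNIV v" and c: "0 \<le> c" and z: "0 \<le> z"
    and h: "z + c*T + c^2*T \<le> c" and fxd: "\<And>t. Gm c K T z u v t = u t" and t: "t \<in> {0..T}"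
  shows "sat c (exp (K * t) * u t) = z + integral {0..t} (Fm c K u v)"
proof -
  have "exp (K * t) * u t = z + integral {0..t} (Fm c K u v)"
    using fxd[of t] clampT_id[OF t] unfolding Gm_def by (auto simp: exp_minus field_simps)
  moreover have "\<bar>z + integral {0..t} (Fm c K u v)\<bar> \<le> c"
    by (rule sol_bound[OF cu cv c z h t])
  ultimately show ?thesis by (simp add: sat_id)
qed

lemma sol_deriv:
  assumes cu: "continuous_on UNIV u" and cv: "continuous_on UNIV v" and c: "0 \<le> c" and t: "t \<in> {0..T}"
  shows "((\<lambda>t. z + integral {0..t} (Fm c K u v)) has_real_derivative Fm c K u v t) (at t within {0..T})"
proof -
  have "continuous_on {0..T} (Fm c K u v)"
    by (rule continuous_on_subset[OF Fm_cont[OF cu cv c]]) auto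
  from integral_has_vector_derivative[OF this t]
  have "((\<lambda>t. integral {0..t} (Fm c K u v)) has_real_derivative Fm c K u v t) (at t within {0..T})"
    by (simp add: has_real_derivative_iff_has_vector_derivative)
  from DERIV_add[OF DERIV_const[of z] this] show ?thesis by simp
qed

theorem mainTheorem4:
  fixes x0 y0 T c0 :: real
  assumes "x0 > 0" and "y0 > 0" and "T > 0" and "c0 > 0"
    and "\<bar>x0\<bar> + \<bar>x0 - y0^2\<bar> * T \<le> c0"
    and "\<bar>y0\<bar> + \<bar>y0 - x0^2\<bar> * T \<le> c0"
    and "\<bar>x0\<bar> + c0 * T + c0^2 * T \<le> c0"
    and "\<bar>y0\<bar> + c0 * T + c0^2 * T \<le> c0"
  shows "\<exists>x y x' y' :: real \<Rightarrow> real.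
           continuous_on {0..T} x' \<and> continuous_on {0..T} y' \<and>
           (\<forall>t\<in>{0..T}. (x has_real_derivative x' t) (at t within {0..T}) \<and>
                           (y has_real_derivative y' t) (at t within {0..T})) \<and>
           (\<forall>t\<in>{0..T}. x' t = x t - (SUP s\<in>{0..t}. (y s)^2) \<and>
                           y' t = y t - (SUP s\<in>{0..t}. (x s)^2)) \<and>
           x 0 = x0 \<and> y 0 = y0"
proof -
  define L where "L = 1 + 2 * c0"
  define K where "K = 4 * L"
  have c: "0 \<le> c0" and K: "0 < K" using assms by (auto simp: K_def L_def)
  have hx: "x0 + c0*T + c0^2*T \<le> c0" and hy: "y0 + c0*T + c0^2*T \<le> c0" and T: "0 \<le> T"
    using assms by auto
  have x0: "0 \<le> x0" and y0: "0 \<le> y0" using assms by auto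
  define \<Phi> :: "(real \<Rightarrow>\<^sub>C real) \<times> (real \<Rightarrow>\<^sub>C real) \<Rightarrow> (real \<Rightarrow>\<^sub>C real) \<times> (real \<Rightarrow>\<^sub>C real)" where
    "\<Phi> p = (Bcontfun (Gm c0 K T x0 (apply_bcontfun (fst p)) (apply_bcontfun (snd p))),
             Bcontfun (Gm c0 K T y0 (apply_bcontfun (snd p)) (apply_bcontfun (fst p))))" for p
  have mem: "Gm c0 K T z (apply_bcontfun a) (apply_bcontfun b) \<in> bcontfun"
    if "0 \<le> z" "z + c0*T + c0^2*T \<le> c0" for z a b
    by (rule Gm_bcont) (use that c T K in auto)
  have app: "apply_bcontfun (Bcontfun (Gm c0 K T z (apply_bcontfun a) (apply_bcontfun b)))
      = Gm c0 K T z (apply_bcontfun a) (apply_bcontfun b)"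
    if "0 \<le> z" "z + c0*T + c0^2*T \<le> c0" for z a b
    using mem[OF that] by (simp add: Bcontfun_inverse)
  have lip1: "dist (Bcontfun (Gm c0 K T z (apply_bcontfun a) (apply_bcontfun b)))
                   (Bcontfun (Gm c0 K T z (apply_bcontfun a') (apply_bcontfun b'))) \<le> (1/4) * D"
    if "0 \<le> z" "z + c0*T + c0^2*T \<le> c0" "dist a a' \<le> D" "dist b b' \<le> D" for z a b a' b' D
  proof (rule dist_bound)
    fix t
    have "\<bar>Gm c0 K T z (apply_bcontfun a) (apply_bcontfun b) t - Gm c0 K T z (apply_bcontfun a') (apply_bcontfun b') t\<bar>
        \<le> (1 + 2*c0) / K * D"
    proof (rule Gm_lip[OF _ _ _ _ c K T])
      fix s
      show "\<bar>apply_bcontfun a s - apply_bcontfun a' s\<bar> \<le> D"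
        using dist_bounded[of a s a'] that(3) by (simp add: dist_real_def)
      show "\<bar>apply_bcontfun b s - apply_bcontfun b' s\<bar> \<le> D"
        using dist_bounded[of b s b'] that(4) by (simp add: dist_real_def)
    qed auto
    also have "(1 + 2*c0) / K * D = (1/4) * D" using K by (simp add: K_def L_def field_simps)
    finally show "dist (apply_bcontfun (Bcontfun (Gm c0 K T z (apply_bcontfun a) (apply_bcontfun b))) t)
       (apply_bcontfun (Bcontfun (Gm c0 K T z (apply_bcontfun a') (apply_bcontfun b'))) t) \<le> (1/4) * D"
      by (simp add: app[OF that(1,2)] dist_real_def)
  qed
  have contr: "dist (\<Phi> p) (\<Phi> q) \<le> (1/2) * dist p q" for p q
  proof -
    have d1: "dist (fst p) (fst q) \<le> dist p q" and d2: "dist (snd p) (snd q) \<le> dist p q"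
      by (rule dist_fst_le, rule dist_snd_le)
    have a: "dist (fst (\<Phi> p)) (fst (\<Phi> q)) \<le> (1/4) * dist p q"
      unfolding \<Phi>_def fst_conv by (rule lip1[OF x0 hx d1 d2])
    have b: "dist (snd (\<Phi> p)) (snd (\<Phi> q)) \<le> (1/4) * dist p q"
      unfolding \<Phi>_def snd_conv by (rule lip1[OF y0 hy d2 d1])
    have "dist (\<Phi> p) (\<Phi> q) = sqrt ((dist (fst (\<Phi> p)) (fst (\<Phi> q)))^2 + (dist (snd (\<Phi> p)) (snd (\<Phi> q)))^2)"
      by (simp add: dist_prod_def)
    also have "\<dots> \<le> \<bar>dist (fst (\<Phi> p)) (fst (\<Phi> q))\<bar> + \<bar>dist (snd (\<Phi> p)) (snd (\<Phi> q))\<bar>"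
      by (rule sqrt_sum_squares_le_sum_abs)
    finally show ?thesis using a b by simp
  qed
  obtain p where pfix: "\<Phi> p = p"
    using banach_fix_type[of "1/2" \<Phi>] contr by auto
  define u where "u = apply_bcontfun (fst p)"
  define v where "v = apply_bcontfun (snd p)"
  have cu: "continuous_on UNIV u" and cv: "continuous_on UNIV v" unfolding u_def v_def by auto
  have fu: "Gm c0 K T x0 u v t = u t" for t
  proof -
    have "fst (\<Phi> p) = fst p" using pfix by simp
    then show ?thesis unfolding \<Phi>_def fst_conv u_def v_def using app[OF x0 hx] by metis
  qed
  have fv: "Gm c0 K T y0 v u t = v t" for t
  proof -
    have "snd (\<Phi> p) = snd p" using pfix by simp
    then show ?thesis unfolding \<Phi>_def snd_conv u_def v_def using app[OF y0 hy] by metis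
  qed
  define x where "x = (\<lambda>t. x0 + integral {0..t} (Fm c0 K u v))"
  define y where "y = (\<lambda>t. y0 + integral {0..t} (Fm c0 K v u))"
  have sx: "sat c0 (exp (K * t) * u t) = x t" if "t \<in> {0..T}" for t
    unfolding x_def by (rule fixed_sol[OF cu cv c x0 hx fu that])
  have sy: "sat c0 (exp (K * t) * v t) = y t" if "t \<in> {0..T}" for t
    unfolding y_def by (rule fixed_sol[OF cv cu c y0 hy fv that])
  show ?thesis
  proof (intro exI conjI ballI)
    show "continuous_on {0..T} (Fm c0 K u v)"
      by (rule continuous_on_subset[OF Fm_cont[OF cu cv c]]) auto
    show "continuous_on {0..T} (Fm c0 K v u)"
      by (rule continuous_on_subset[OF Fm_cont[OF cv cu c]]) auto
    fix t assume t: "t \<in> {0..T}"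
    show "(x has_real_derivative Fm c0 K u v t) (at t within {0..T})"
      unfolding x_def by (rule sol_deriv[OF cu cv c t])
    show "(y has_real_derivative Fm c0 K v u t) (at t within {0..T})"
      unfolding y_def by (rule sol_deriv[OF cv cu c t])
    have e1: "rmax (\<lambda>r. (sat c0 (exp (K * r) * v r))^2) t = (SUP s\<in>{0..t}. (y s)^2)"
      unfolding rmax_def using t by (intro SUP_cong refl) (auto simp: sy)
    have e2: "rmax (\<lambda>r. (sat c0 (exp (K * r) * u r))^2) t = (SUP s\<in>{0..t}. (x s)^2)"
      unfolding rmax_def using t by (intro SUP_cong refl) (auto simp: sx)
    show "Fm c0 K u v t = x t - (SUP s\<in>{0..t}. (y s)^2)"
      unfolding Fm_def e1 sx[OF t] ..
    show "Fm c0 K v u t = y t - (SUP s\<in>{0..t}. (x s)^2)"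
      unfolding Fm_def e2 sy[OF t] ..
  next
    show "x 0 = x0" unfolding x_def by simp
    show "y 0 = y0" unfolding y_def by simp
  qed
qed

end
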